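(* Let $(X,\cdot)$ be a Rump right quasigroup, and for $x,y\in X$ write $x/y$ for the unique element $w$ with $wy = x$. Then for all $x,y \in X$: (1) $(xx)\bigl(y/(xx)\bigr) = \Bigl(x\bigl((y/(xx))/x\bigr)\Bigr)\Bigl(x\bigl((y/(xx))/x\bigr)\Bigr)$; (2) $(xx)/\bigl(y(x/y)\bigr) = (x/y)(x/y)$.
   Context: A magma $(X,\cdot)$ is a right quasigroup if every right translation $r_x: y \mapsto yx$ is a bijection of $X$; then $x/y := r_y^{-1}(x)$. A Rump right quasigroup is a right quasigroup satisfying $(zx)(yx) = (zy)(xy)$ for all $x,y,z\in X$. *)

theory Defs
  imports Main
begin

definition right_quasigroup :: "('a \<Rightarrow> 'a \<Rightarrow> 'a) \<Rightarrow> bool" where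
  "right_quasigroup m \<longleftrightarrow> (\<forall>x. bij (\<lambda>y. m y x))"

definition rump_right_quasigroup :: "('a \<Rightarrow> 'a \<Rightarrow> 'a) \<Rightarrow> bool" where
  "rump_right_quasigroup m \<longleftrightarrow> right_quasigroup m \<and>
     (\<forall>x y z. m (m z x) (m y x) = m (m z y) (m x y))"

definition rdiv :: "('a \<Rightarrow> 'a \<Rightarrow> 'a) \<Rightarrow> 'a \<Rightarrow> 'a \<Rightarrow> 'a" where
  "rdiv m x y = inv (\<lambda>w. m w y) x"

end

theory Submission
  imports Defs
begin

lemma rd1:
  assumes "right_quasigroup m"
  shows "m (rdiv m x y) y = x"
proof -
  have "bij (\<lambda>w. m w y)" using assms unfolding right_quasigroup_def by blast
  then have "(\<lambda>w. m w y) (inv (\<lambda>w. m w y) x) = x" by (meson bij_is_surj surj_f_inv_f)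
  then show ?thesis unfolding rdiv_def by simp
qed

lemma rd2:
  assumes "right_quasigroup m"
  shows "rdiv m (m w y) y = w"
proof -
  have "bij (\<lambda>w. m w y)" using assms unfolding right_quasigroup_def by blast
  then have "inv (\<lambda>w. m w y) ((\<lambda>w. m w y) w) = w" by (meson bij_is_inj inv_f_f)
  then show ?thesis unfolding rdiv_def by simp
qed

theorem mainTheorem2:
  fixes m :: "'a \<Rightarrow> 'a \<Rightarrow> 'a"
  assumes "rump_right_quasigroup m"
  shows "\<forall>x y.
     m (m x x) (rdiv m y (m x x)) =
       m (m x (rdiv m (rdiv m y (m x x)) x)) (m x (rdiv m (rdiv m y (m x x)) x))
   \<and> rdiv m (m x x) (m y (rdiv m x y)) = m (rdiv m x y) (rdiv m x y)"
proof (intro allI conjI)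
  have rq: "right_quasigroup m" and R: "\<And>x y z. m (m z x) (m y x) = m (m z y) (m x y)"
    using assms unfolding rump_right_quasigroup_def by blast+
  fix x y
  let ?u = "rdiv m y (m x x)"
  let ?w = "rdiv m ?u x"
  have "m (m x x) (m ?w x) = m (m x ?w) (m x ?w)" by (rule R)
  then show "m (m x x) ?u = m (m x ?w) (m x ?w)" using rd1[OF rq, of ?u x] by simp
  let ?v = "rdiv m x y"
  have "m (m ?v ?v) (m y ?v) = m (m ?v y) (m ?v y)" by (rule R)
  then have "m (m ?v ?v) (m y ?v) = m x x" using rd1[OF rq, of x y] by simp
  then show "rdiv m (m x x) (m y ?v) = m ?v ?v" using rd2[OF rq, of "m ?v ?v" "m y ?v"] by simp
qed

end
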